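(* Let $M$ be a $\bar{\mathfrak D}$-module (not necessarily a weight module) on which the subalgebra $\bar{\mathfrak D}^{+}$ acts locally finitely. Then: (i) $M$ contains a nonzero vector $v$ such that $\bar{\mathfrak D}^{+}v\subseteq\mathbb Cv$; (ii) if $M$ is simple, then $M$ is a Whittaker module or a highest weight module.
   Context: $\bar{\mathfrak D}$ is the Lie algebra with basis $\{d_m,h_r,\bar c_1,\bar c_2,\bar c_3:m,r\in\mathbb Z\}$, brackets $[d_m,d_n]=(m-n)d_{m+n}+\delta_{m+n,0}\frac{m^3-m}{12}\bar c_1$, $[d_m,h_r]=-rh_{m+r}+\delta_{m+r,0}(m^2+m)\bar c_2$, $[h_r,h_s]=r\delta_{r+s,0}\bar c_3$, with $\bar c_i$ central. $\bar{\mathfrak D}^{\pm}=\bigoplus_{n\ge1}(\mathbb Cd_{\pm n}\oplus\mathbb Ch_{\pm n})$ and $\bar{\mathfrak D}^0=\mathbb Cd_0\oplus\mathbb Ch_0\oplus\mathbb C\bar c_1\oplus\mathbb C\bar c_2\oplus\mathbb C\bar c_3$. $\bar{\mathfrak D}^+$ acts locally finitely on $M$ if every vector of $M$ lies in a finite-dimensional $\bar{\mathfrak D}^+$-submodule. A Whittaker module is a module generated by a nonzero vector $v$ with $xv=\varphi(x)v$ for all $x\in\bar{\mathfrak D}^+$, for some Lie algebra homomorphism $\varphi:\bar{\mathfrak D}^+\to\mathbb C$; a highest weight module is a module generated by a nonzero vector $v$ with $\bar{\mathfrak D}^+v=0$ and $\bar{\mathfrak D}^0v\subseteq\mathbb Cv$.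 *)

theory Defs
  imports Complex_Main
begin

text \<open>A module over the Lie algebra Dbar is a complex vector space (additive group 'm with
  scalar multiplication smul) together with linear operators giving the action of the basis
  elements d_m, h_r, c1, c2, c3, such that commutators of operators realise the brackets.\<close>

definition Dbar_module ::
  "(complex \<Rightarrow> 'm::ab_group_add \<Rightarrow> 'm) \<Rightarrow> (int \<Rightarrow> 'm \<Rightarrow> 'm) \<Rightarrow> (int \<Rightarrow> 'm \<Rightarrow> 'm)
   \<Rightarrow> ('m \<Rightarrow> 'm) \<Rightarrow> ('m \<Rightarrow> 'm) \<Rightarrow> ('m \<Rightarrow> 'm) \<Rightarrow> bool" where
  "Dbar_module smul d h c1 c2 c3 \<longleftrightarrow>
     vector_space smul \<and>
     (\<forall>m. Vector_Spaces.linear smul smul (d m)) \<and>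
     (\<forall>r. Vector_Spaces.linear smul smul (h r)) \<and>
     Vector_Spaces.linear smul smul c1 \<and>
     Vector_Spaces.linear smul smul c2 \<and>
     Vector_Spaces.linear smul smul c3 \<and>
     (\<forall>m n v. d m (d n v) - d n (d m v) =
        smul (of_int (m - n)) (d (m + n) v) +
        (if m + n = 0 then smul (of_int (m ^ 3 - m) / 12) (c1 v) else 0)) \<and>
     (\<forall>m r v. d m (h r v) - h r (d m v) =
        smul (of_int (- r)) (h (m + r) v) +
        (if m + r = 0 then smul (of_int (m ^ 2 + m)) (c2 v) else 0)) \<and>
     (\<forall>r s v. h r (h s v) - h s (h r v) =
        (if r + s = 0 then smul (of_int r) (c3 v) else 0)) \<and>
     (\<forall>c \<in> {c1, c2, c3}.
        (\<forall>m v. c (d m v) = d m (c v)) \<and> (\<forall>r v. c (h r v) = h r (c v)) \<and>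
        (\<forall>c' \<in> {c1, c2, c3}. \<forall>v. c (c' v) = c' (c v)))"

definition Dbar_submodule ::
  "(complex \<Rightarrow> 'm::ab_group_add \<Rightarrow> 'm) \<Rightarrow> (int \<Rightarrow> 'm \<Rightarrow> 'm) \<Rightarrow> (int \<Rightarrow> 'm \<Rightarrow> 'm)
   \<Rightarrow> ('m \<Rightarrow> 'm) \<Rightarrow> ('m \<Rightarrow> 'm) \<Rightarrow> ('m \<Rightarrow> 'm) \<Rightarrow> 'm set \<Rightarrow> bool" where
  "Dbar_submodule smul d h c1 c2 c3 W \<longleftrightarrow>
     module.subspace smul W \<and>
     (\<forall>m. d m ` W \<subseteq> W) \<and> (\<forall>r. h r ` W \<subseteq> W) \<and>
     c1 ` W \<subseteq> W \<and> c2 ` W \<subseteq> W \<and> c3 ` W \<subseteq> W"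

definition Dbar_simple ::
  "(complex \<Rightarrow> 'm::ab_group_add \<Rightarrow> 'm) \<Rightarrow> (int \<Rightarrow> 'm \<Rightarrow> 'm) \<Rightarrow> (int \<Rightarrow> 'm \<Rightarrow> 'm)
   \<Rightarrow> ('m \<Rightarrow> 'm) \<Rightarrow> ('m \<Rightarrow> 'm) \<Rightarrow> ('m \<Rightarrow> 'm) \<Rightarrow> bool" where
  "Dbar_simple smul d h c1 c2 c3 \<longleftrightarrow>
     (\<exists>v::'m::ab_group_add. v \<noteq> 0) \<and>
     (\<forall>W. Dbar_submodule smul d h c1 c2 c3 W \<longrightarrow> W = {0} \<or> W = UNIV)"

definition Dbar_generated_by ::
  "(complex \<Rightarrow> 'm::ab_group_add \<Rightarrow> 'm) \<Rightarrow> (int \<Rightarrow> 'm \<Rightarrow> 'm) \<Rightarrow> (int \<Rightarrow> 'm \<Rightarrow> 'm)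
   \<Rightarrow> ('m \<Rightarrow> 'm) \<Rightarrow> ('m \<Rightarrow> 'm) \<Rightarrow> ('m \<Rightarrow> 'm) \<Rightarrow> 'm \<Rightarrow> bool" where
  "Dbar_generated_by smul d h c1 c2 c3 (v::'m::ab_group_add) \<longleftrightarrow>
     (\<forall>W. Dbar_submodule smul d h c1 c2 c3 W \<and> v \<in> W \<longrightarrow> W = UNIV)"

text \<open>Dbar^+ (spanned by d_n, h_n, n \<ge> 1) acts locally finitely: every vector lies in a
  finite-dimensional subspace stable under Dbar^+.\<close>
definition Dplus_locally_finite ::
  "(complex \<Rightarrow> 'm::ab_group_add \<Rightarrow> 'm) \<Rightarrow> (int \<Rightarrow> 'm \<Rightarrow> 'm) \<Rightarrow> (int \<Rightarrow> 'm \<Rightarrow> 'm) \<Rightarrow> bool" where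
  "Dplus_locally_finite smul d h \<longleftrightarrow>
     (\<forall>v. \<exists>W. v \<in> W \<and> module.subspace smul W \<and>
        (\<exists>B. finite B \<and> W = module.span smul B) \<and>
        (\<forall>n\<ge>1. d n ` W \<subseteq> W \<and> h n ` W \<subseteq> W))"

text \<open>A linear map phi : Dbar^+ \<rightarrow> C is determined by its values phid n = phi(d_n),
  phih n = phi(h_n), n \<ge> 1.  It is a Lie algebra homomorphism iff it kills all brackets of
  basis elements of Dbar^+, i.e. phi([d_m,d_n]) = (m-n) phi(d_(m+n)) = 0,
  phi([d_m,h_r]) = -r phi(h_(m+r)) = 0, phi([h_r,h_s]) = 0 for m,n,r,s \<ge> 1.\<close>
definition Dplus_Lie_hom :: "(int \<Rightarrow> complex) \<Rightarrow> (int \<Rightarrow> complex) \<Rightarrow> bool" where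
  "Dplus_Lie_hom phid phih \<longleftrightarrow>
     (\<forall>m\<ge>1. \<forall>n\<ge>1. of_int (m - n) * phid (m + n) = 0) \<and>
     (\<forall>m\<ge>1. \<forall>r\<ge>1. of_int (- r) * phih (m + r) = 0)"

definition Dbar_Whittaker_module ::
  "(complex \<Rightarrow> 'm::ab_group_add \<Rightarrow> 'm) \<Rightarrow> (int \<Rightarrow> 'm \<Rightarrow> 'm) \<Rightarrow> (int \<Rightarrow> 'm \<Rightarrow> 'm)
   \<Rightarrow> ('m \<Rightarrow> 'm) \<Rightarrow> ('m \<Rightarrow> 'm) \<Rightarrow> ('m \<Rightarrow> 'm) \<Rightarrow> bool" where
  "Dbar_Whittaker_module smul d h c1 c2 c3 \<longleftrightarrow>
     (\<exists>(v::'m::ab_group_add) phid phih. v \<noteq> 0 \<and> Dplus_Lie_hom phid phih \<and>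
        (\<forall>n\<ge>1. d n v = smul (phid n) v \<and> h n v = smul (phih n) v) \<and>
        Dbar_generated_by smul d h c1 c2 c3 v)"

definition Dbar_highest_weight_module ::
  "(complex \<Rightarrow> 'm::ab_group_add \<Rightarrow> 'm) \<Rightarrow> (int \<Rightarrow> 'm \<Rightarrow> 'm) \<Rightarrow> (int \<Rightarrow> 'm \<Rightarrow> 'm)
   \<Rightarrow> ('m \<Rightarrow> 'm) \<Rightarrow> ('m \<Rightarrow> 'm) \<Rightarrow> ('m \<Rightarrow> 'm) \<Rightarrow> bool" where
  "Dbar_highest_weight_module smul d h c1 c2 c3 \<longleftrightarrow>
     (\<exists>v::'m::ab_group_add. v \<noteq> 0 \<and>
        (\<forall>n\<ge>1. d n v = 0 \<and> h n v = 0) \<and>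
        d 0 v \<in> module.span smul {v} \<and> h 0 v \<in> module.span smul {v} \<and>
        c1 v \<in> module.span smul {v} \<and> c2 v \<in> module.span smul {v} \<and>
        c3 v \<in> module.span smul {v} \<and>
        Dbar_generated_by smul d h c1 c2 c3 v)"

end

theory Submission
  imports Defs "HOL-Library.Function_Algebras" "HOL-Computational_Algebra.Fundamental_Theorem_Algebra"
begin

lemma lin_hom: "Vector_Spaces.linear s s f \<Longrightarrow> module_hom s s f"
  by (simp add: module_hom_iff_linear)
lemma lin_add: "Vector_Spaces.linear s s f \<Longrightarrow> f (x + y) = f x + f y"
  using lin_hom module_hom.add by blast
lemma lin_scale: "Vector_Spaces.linear s s f \<Longrightarrow> f (s c x) = s c (f x)"
  using lin_hom module_hom.scale by blast
lemma lin_0: "Vector_Spaces.linear s s f \<Longrightarrow> f 0 = 0"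
  using lin_hom module_hom.zero by blast
lemma lin_diff: "Vector_Spaces.linear s s f \<Longrightarrow> f (x - y) = f x - f y"
  using lin_hom module_hom.diff by blast
lemma lin_sum: "Vector_Spaces.linear s s f \<Longrightarrow> f (sum g A) = (\<Sum>a\<in>A. f (g a))"
  using lin_hom module_hom.sum by blast

lemma sum_fun_apply: "(sum f A) x = (\<Sum>i\<in>A. f i x)"
  by (induct A rule: infinite_finite_induct) auto

locale cvs = vector_space smul for smul :: "complex \<Rightarrow> 'm::ab_group_add \<Rightarrow> 'm"
begin

lemma seq_dependent:
  assumes G: "finite G" and f: "\<And>i. i \<le> K \<Longrightarrow> f i \<in> span G" and K: "card G \<le> (K::nat)"
  shows "\<exists>a. (\<exists>i\<le>K. a i \<noteq> 0) \<and> (\<Sum>i\<le>K. smul (a i) (f i)) = 0"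
proof (cases "inj_on f {..K}")
  case False
  then obtain i j where ij: "i \<le> K" "j \<le> K" "i \<noteq> j" "f i = f j" by (auto simp: inj_on_def)
  let ?a = "\<lambda>n. if n = i then 1 else if n = j then -1 else (0::complex)"
  have "(\<Sum>n\<le>K. smul (?a n) (f n)) = (\<Sum>n\<in>{i,j}. smul (?a n) (f n))"
    by (rule sum.mono_neutral_right) (use ij in auto)
  also have "\<dots> = 0" using ij by simp
  finally show ?thesis using ij by (intro exI[of _ ?a]) auto
next
  case True
  have cK: "card (f ` {..K}) = K + 1" using card_image[OF True] by simp
  have "dependent (f ` {..K})"
  proof (rule ccontr)
    assume ind: "independent (f ` {..K})"
    have "f ` {..K} \<subseteq> span G" using f by auto
    from independent_span_bound[OF G ind this] cK K show False by simp
  qed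
  then obtain t u where t: "finite t" "t \<subseteq> f ` {..K}" "(\<Sum>v\<in>t. smul (u v) v) = 0" "\<exists>v\<in>t. u v \<noteq> 0"
    by (auto simp: dependent_explicit)
  let ?a = "\<lambda>n. if f n \<in> t then u (f n) else 0"
  let ?A = "{n\<in>{..K}. f n \<in> t}"
  have A: "f ` ?A = t" using t(2) by auto
  have inj: "inj_on f ?A" using True by (rule inj_on_subset) auto
  have "(\<Sum>n\<le>K. smul (?a n) (f n)) = (\<Sum>n\<le>K. if f n \<in> t then smul (u (f n)) (f n) else 0)"
    by (rule sum.cong) auto
  also have "\<dots> = (\<Sum>n\<in>?A. smul (u (f n)) (f n))"
    using sum.inter_filter[of "{..K}" "\<lambda>n. smul (u (f n)) (f n)" "\<lambda>n. f n \<in> t"] by simp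
  also have "\<dots> = (\<Sum>v\<in>f ` ?A. smul (u v) v)"
    using sum.reindex[OF inj, of "\<lambda>v. smul (u v) v"] by simp
  also have "\<dots> = 0" using A t(3) by simp
  finally have "(\<Sum>n\<le>K. smul (?a n) (f n)) = 0" .
  moreover from t(4) obtain v where "v \<in> t" "u v \<noteq> 0" by blast
  then obtain n where "n \<le> K" "f n = v" using t(2) by auto
  ultimately show ?thesis using \<open>v \<in> t\<close> \<open>u v \<noteq> 0\<close> by (intro exI[of _ ?a]) auto
qed

lemma top_rel:
  assumes "(\<Sum>i\<le>(K::nat). smul (a i) (f i)) = 0" "\<exists>i\<le>K. a i \<noteq> 0"
  shows "\<exists>m. a m \<noteq> 0 \<and> (\<Sum>i\<le>m. smul (a i) (f i)) = 0"
proof -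
  let ?S = "{i. i \<le> K \<and> a i \<noteq> 0}"
  let ?m = "Max ?S"
  have fin: "finite ?S" by simp
  have ne: "?S \<noteq> {}" using assms(2) by auto
  have m: "?m \<in> ?S" using Max_in[OF fin ne] .
  have "(\<Sum>i\<le>?m. smul (a i) (f i)) = (\<Sum>i\<le>K. smul (a i) (f i))"
  proof (rule sum.mono_neutral_left)
    show "{..?m} \<subseteq> {..K}" using m by auto
    show "\<forall>i\<in>{..K} - {..?m}. smul (a i) (f i) = 0"
    proof
      fix i assume i: "i \<in> {..K} - {..?m}"
      have "a i = 0"
      proof (rule ccontr)
        assume "a i \<noteq> 0"
        then have "i \<in> ?S" using i by auto
        then have "i \<le> ?m" using Max_ge[OF fin] by blast
        then show False using i by auto
      qed
      then show "smul (a i) (f i) = 0" by simp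
    qed
  qed simp
  then show ?thesis using m assms(1) by auto
qed

definition peval :: "('m \<Rightarrow> 'm) \<Rightarrow> complex poly \<Rightarrow> 'm \<Rightarrow> 'm" where
  "peval T p u = (\<Sum>i\<le>degree p. smul (coeff p i) ((T^^i) u))"

lemma peval_ext: "degree p \<le> K \<Longrightarrow> peval T p u = (\<Sum>i\<le>K. smul (coeff p i) ((T^^i) u))"
  unfolding peval_def by (rule sum.mono_neutral_left) (auto simp: coeff_eq_0)

lemma peval_lin:
  assumes T: "Vector_Spaces.linear smul smul T"
  shows "peval T ([:-r, 1:] * q) u = T (peval T q u) - smul r (peval T q u)"
proof -
  let ?K = "Suc (degree q)"
  have pq: "[:-r, 1:] * q = smult (-r) q + pCons 0 q"
    by (simp add: mult_pCons_left)
  have dq: "degree ([:-r, 1:] * q) \<le> ?K"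
    using degree_mult_le[of "[:-r, 1:]" q] by simp
  have "peval T ([:-r, 1:] * q) u = (\<Sum>i\<le>?K. smul (coeff ([:-r, 1:] * q) i) ((T^^i) u))"
    by (rule peval_ext[OF dq])
  also have "\<dots> = (\<Sum>i\<le>?K. smul (- r * coeff q i) ((T^^i) u) + smul (coeff (pCons 0 q) i) ((T^^i) u))"
    unfolding pq by (intro sum.cong refl) (simp only: coeff_add coeff_smult scale_left_distrib)
  also have "\<dots> = (\<Sum>i\<le>?K. smul (- r * coeff q i) ((T^^i) u)) + (\<Sum>i\<le>?K. smul (coeff (pCons 0 q) i) ((T^^i) u))"
    by (rule sum.distrib)
  also have "(\<Sum>i\<le>?K. smul (- r * coeff q i) ((T^^i) u)) = - smul r (\<Sum>i\<le>?K. smul (coeff q i) ((T^^i) u))"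
    by (simp del: sum.atMost_Suc add: scale_sum_right sum_negf)
  also have "(\<Sum>i\<le>?K. smul (coeff q i) ((T^^i) u)) = peval T q u"
    by (rule peval_ext[symmetric]) simp
  also have "(\<Sum>i\<le>?K. smul (coeff (pCons 0 q) i) ((T^^i) u)) = (\<Sum>i\<le>degree q. smul (coeff q i) ((T^^(Suc i)) u))"
    by (subst sum.atMost_Suc_shift) simp
  also have "\<dots> = T (peval T q u)"
    by (simp add: peval_def lin_sum[OF T] lin_scale[OF T])
  finally show ?thesis by simp
qed

lemma funpow_in: "T ` S \<subseteq> S \<Longrightarrow> u \<in> S \<Longrightarrow> (T^^i) u \<in> S"
  by (induct i) auto

lemma peval_in: "subspace S \<Longrightarrow> T ` S \<subseteq> S \<Longrightarrow> u \<in> S \<Longrightarrow> peval T p u \<in> S"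
  unfolding peval_def by (intro subspace_sum subspace_scale funpow_in) auto

lemma eigen:
  assumes B: "finite B" and S: "subspace S" "S \<subseteq> span B" and u: "u \<in> S" "u \<noteq> 0"
    and T: "Vector_Spaces.linear smul smul T" "T ` S \<subseteq> S"
  shows "\<exists>w\<in>S. w \<noteq> 0 \<and> (\<exists>r. T w = smul r w)"
proof -
  have fi: "\<And>i. (T^^i) u \<in> S" using funpow_in[OF T(2) u(1)] .
  obtain a where a: "\<exists>i\<le>card B. a i \<noteq> 0" "(\<Sum>i\<le>card B. smul (a i) ((T^^i) u)) = 0"
    using seq_dependent[OF B, of "card B" "\<lambda>i. (T^^i) u"] fi S(2) by blast
  define p where "p = (\<Sum>i\<le>card B. monom (a i) i)"
  have cp: "coeff p i = (if i \<le> card B then a i else 0)" for i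
    by (simp add: p_def coeff_sum coeff_monom)
  have dp: "degree p \<le> card B"
    by (rule degree_le) (simp add: cp)
  have p0: "p \<noteq> 0" using a(1) cp by (metis coeff_0)
  have pe: "peval T p u = 0"
    using a(2) by (simp add: peval_ext[OF dp] cp)
  obtain p0 where p0: "p0 \<noteq> 0" "peval T p0 u = 0"
    and min: "\<And>q. q \<noteq> 0 \<Longrightarrow> peval T q u = 0 \<Longrightarrow> degree p0 \<le> degree q"
    using ex_has_least_nat[of "\<lambda>p. p \<noteq> 0 \<and> peval T p u = 0" p degree] p0 pe by blast
  have "degree p0 \<noteq> 0"
  proof
    assume d: "degree p0 = 0"
    have "peval T p0 u = smul (coeff p0 0) u" by (simp add: peval_def d)
    moreover have "coeff p0 0 \<noteq> 0" using leading_coeff_neq_0[OF p0(1)] d by simp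
    ultimately show False using p0(2) u(2) by simp
  qed
  then obtain r where "poly p0 r = 0"
    using fundamental_theorem_of_algebra[of p0] constant_degree[of p0] by metis
  then obtain q where q: "p0 = [:-r, 1:] * q" using poly_eq_0_iff_dvd by (metis dvdE)
  have q0: "q \<noteq> 0" using q p0(1) by auto
  have "degree p0 = degree [:-r, 1:] + degree q" unfolding q by (rule degree_mult_eq) (use q0 in auto)
  then have "degree p0 = 1 + degree q" by simp
  then have w0: "peval T q u \<noteq> 0" using min[OF q0] by fastforce
  have "T (peval T q u) - smul r (peval T q u) = 0"
    using peval_lin[OF T(1), of r q u] q p0(2) by simp
  then show ?thesis using w0 peval_in[OF S(1) T(2) u(1)] by (intro bexI[of _ "peval T q u"]) auto
qed

lemma heis:
  assumes B: "finite B" and E: "subspace E" "E \<subseteq> span B" and u: "u \<in> E" "u \<noteq> 0"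
    and X: "Vector_Spaces.linear smul smul X" "X ` E \<subseteq> E"
    and Y: "Vector_Spaces.linear smul smul Y" "Y ` E \<subseteq> E"
    and comm: "\<And>x. x \<in> E \<Longrightarrow> X (Y x) - Y (X x) = smul c x"
  shows "c = 0"
proof (rule ccontr)
  assume c: "c \<noteq> 0"
  obtain w b where w: "w \<in> E" "w \<noteq> 0" "Y w = smul b w"
    using eigen[OF B E u Y] by blast
  define wk where "wk i = (X^^i) w" for i
  have wkE: "wk i \<in> E" for i unfolding wk_def using funpow_in[OF X(2) w(1)] .
  have YX: "Y (X x) = X (Y x) - smul c x" if "x \<in> E" for x
    using comm[OF that] by (simp add: algebra_simps)
  have Yw: "Y (wk (Suc k)) = smul b (wk (Suc k)) - smul (of_nat (Suc k) * c) (wk k)" for k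
  proof (induct k)
    case 0
    show ?case using YX[OF w(1)] w(3) by (simp add: wk_def lin_scale[OF X(1)])
  next
    case (Suc k)
    have "Y (wk (Suc (Suc k))) = X (Y (wk (Suc k))) - smul c (wk (Suc k))"
      using YX[OF wkE[of "Suc k"]] by (simp add: wk_def)
    also have "\<dots> = smul b (wk (Suc (Suc k))) - smul (of_nat (Suc k) * c) (wk (Suc k)) - smul c (wk (Suc k))"
      unfolding Suc by (simp add: lin_diff[OF X(1)] lin_scale[OF X(1)] wk_def)
    also have "\<dots> = smul b (wk (Suc (Suc k))) - smul (of_nat (Suc (Suc k)) * c) (wk (Suc k))"
      by (simp add: algebra_simps) (simp only: mult_2_right scale_left_distrib)
    finally show ?case .
  qed
  define R where "R m \<longleftrightarrow> (\<exists>a. a m \<noteq> 0 \<and> (\<Sum>i\<le>m. smul (a i) (wk i)) = 0)" for m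
  obtain a where a: "\<exists>i\<le>card B. a i \<noteq> 0" "(\<Sum>i\<le>card B. smul (a i) (wk i)) = 0"
    using seq_dependent[OF B, of "card B" wk] wkE E(2) by blast
  have "\<exists>m. R m" using top_rel[OF a(2) a(1)] unfolding R_def by blast
  then obtain m0 where m0: "R m0" and min: "\<And>m. R m \<Longrightarrow> m0 \<le> m"
    using ex_has_least_nat[of R _ "\<lambda>m. m"] by blast
  from m0 obtain a where a: "a m0 \<noteq> 0" "(\<Sum>i\<le>m0. smul (a i) (wk i)) = 0" unfolding R_def by blast
  show False
  proof (cases m0)
    case 0
    then show False using a w(2) by (simp add: wk_def)
  next
    case (Suc m)
    have nz: "(1::complex) + of_nat m \<noteq> 0" by (metis of_nat_Suc of_nat_neq_0)
    have "0 = Y (\<Sum>i\<le>m0. smul (a i) (wk i)) - smul b (\<Sum>i\<le>m0. smul (a i) (wk i))"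
      using a(2) by (simp add: lin_0[OF Y(1)])
    also have "\<dots> = (\<Sum>i\<le>m0. smul (a i) (Y (wk i) - smul b (wk i)))"
      by (simp add: lin_sum[OF Y(1)] lin_scale[OF Y(1)] scale_sum_right sum_subtractf
          scale_right_diff_distrib scale_left_commute mult.commute)
    also have "\<dots> = (\<Sum>i\<le>m. smul (a (Suc i)) (Y (wk (Suc i)) - smul b (wk (Suc i))))"
      unfolding Suc by (subst sum.atMost_Suc_shift) (simp add: wk_def w(3))
    also have "\<dots> = (\<Sum>i\<le>m. smul (- (a (Suc i) * of_nat (Suc i) * c)) (wk i))"
      by (intro sum.cong refl) (simp add: Yw)
    finally have "R m" unfolding R_def using a(1) c Suc nz
      by (intro exI[of _ "\<lambda>i. - (a (Suc i) * of_nat (Suc i) * c)"]) auto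
    then show False using min Suc by fastforce
  qed
qed

lemma width:
  fixes X :: "int \<Rightarrow> 'm \<Rightarrow> 'm" and D1 :: "'m \<Rightarrow> 'm" and c :: "nat \<Rightarrow> complex"
  assumes D1: "Vector_Spaces.linear smul smul D1" "D1 ` W \<subseteq> W"
    and X: "\<And>k. Vector_Spaces.linear smul smul (X k)"
    and comm: "\<And>k w. k \<ge> 1 \<Longrightarrow> w \<in> W \<Longrightarrow> D1 (X k w) - X k (D1 w) = smul (of_int (g - k)) (X (k+1) w)"
  shows "(\<forall>j\<ge>jz. \<forall>w\<in>W. (\<Sum>n\<le>L. smul (c n) (X (int n + j) w)) = 0) \<Longrightarrow> jz \<ge> 1 \<Longrightarrow> c L \<noteq> 0
    \<Longrightarrow> \<exists>N. \<forall>k\<ge>N. \<forall>w\<in>W. X k w = 0"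
proof (induct L arbitrary: c jz)
  case 0
  show ?case
  proof (intro exI[of _ jz] allI impI ballI)
    fix k w assume "k \<ge> jz" "w \<in> W"
    then have "smul (c 0) (X k w) = 0" using "0.prems"(1) by force
    then show "X k w = 0" using "0.prems"(3) by simp
  qed
next
  case (Suc L)
  let ?c = "\<lambda>n. c (Suc n) * of_nat (Suc n)"
  have step: "(\<Sum>n\<le>L. smul (?c n) (X (int n + j) w)) = 0" if j: "j \<ge> jz + 2" "w \<in> W" for j w
  proof -
    define i where "i = j - 2"
    have i1: "i \<ge> jz" using j by (simp add: i_def)
    have r1: "(\<Sum>n\<le>Suc L. smul (c n) (X (int n + i) w)) = 0" using Suc.prems(1) i1 j(2) by blast
    have r2: "(\<Sum>n\<le>Suc L. smul (c n) (X (int n + i) (D1 w))) = 0"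
      using Suc.prems(1) i1 D1(2) j(2) by blast
    have r3: "(\<Sum>n\<le>Suc L. smul (c n) (X (int n + (i + 1)) w)) = 0"
    proof -
      have "i + 1 \<ge> jz" using i1 by simp
      then show ?thesis using Suc.prems(1) j(2) by blast
    qed
    have "D1 (\<Sum>n\<le>Suc L. smul (c n) (X (int n + i) w)) - (\<Sum>n\<le>Suc L. smul (c n) (X (int n + i) (D1 w)))
        = (\<Sum>n\<le>Suc L. smul (c n) (D1 (X (int n + i) w) - X (int n + i) (D1 w)))"
      by (simp del: sum.atMost_Suc add: lin_sum[OF D1(1)] lin_scale[OF D1(1)] sum_subtractf scale_right_diff_distrib)
    also have "\<dots> = (\<Sum>n\<le>Suc L. smul (c n * of_int (g - (int n + i))) (X (int n + i + 1) w))"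
      by (intro sum.cong refl) (use i1 Suc.prems(2) j(2) in \<open>simp add: comm\<close>)
    finally have r4: "(\<Sum>n\<le>Suc L. smul (c n * of_int (g - (int n + i))) (X (int n + i + 1) w)) = 0"
      using r1 r2 by (simp del: sum.atMost_Suc add: lin_0[OF D1(1)])
    have "(\<Sum>n\<le>Suc L. smul (c n * of_nat n) (X (int n + i + 1) w))
       = (\<Sum>n\<le>Suc L. smul (of_int (g - i)) (smul (c n) (X (int n + (i + 1)) w))
            - smul (c n * of_int (g - (int n + i))) (X (int n + i + 1) w))"
      by (intro sum.cong refl) (simp add: algebra_simps flip: scale_left_diff_distrib)
    also have "\<dots> = smul (of_int (g - i)) (\<Sum>n\<le>Suc L. smul (c n) (X (int n + (i + 1)) w))
        - (\<Sum>n\<le>Suc L. smul (c n * of_int (g - (int n + i))) (X (int n + i + 1) w))"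
      by (simp only: sum_subtractf scale_sum_right)
    also have "\<dots> = 0" unfolding r3 r4 by simp
    finally have r5: "(\<Sum>n\<le>Suc L. smul (c n * of_nat n) (X (int n + i + 1) w)) = 0" .
    then have "(\<Sum>n\<le>L. smul (c (Suc n) * of_nat (Suc n)) (X (int (Suc n) + i + 1) w)) = 0"
      by (subst (asm) sum.atMost_Suc_shift) simp
    moreover have "int (Suc n) + i + 1 = int n + j" for n by (simp add: i_def)
    ultimately show ?thesis by (simp only:)
  qed
  have "?c L \<noteq> 0" using Suc.prems(3) of_nat_neq_0[of L, where 'a=complex] by (simp only: mult_eq_0_iff) simp
  moreover have "jz + 2 \<ge> 1" using Suc.prems(2) by simp
  ultimately show ?case using Suc.hyps[of "jz + 2" ?c] step by blast
qed

lemma op_relation: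
  assumes B: "finite B" and X: "\<And>n. Vector_Spaces.linear smul smul (X n)"
    and XB: "\<And>n b. n \<ge> 1 \<Longrightarrow> b \<in> B \<Longrightarrow> X n b \<in> span B"
  shows "\<exists>m a. a m \<noteq> 0 \<and> (\<forall>w\<in>span B. (\<Sum>i\<le>m. smul (a i) (X (int i + 1) w)) = 0)"
proof -
  define fs :: "complex \<Rightarrow> ('m \<Rightarrow> 'm) \<Rightarrow> ('m \<Rightarrow> 'm)" where "fs = (\<lambda>c f x. smul c (f x))"
  interpret F: cvs fs
    by unfold_locales (auto simp: fs_def fun_eq_iff scale_right_distrib scale_left_distrib)
  define dl :: "'m \<Rightarrow> 'm \<Rightarrow> 'm \<Rightarrow> 'm" where "dl b y = (\<lambda>x. if x = b then y else 0)" for b y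
  define G where "G = (\<lambda>(b,y). dl b y) ` (B \<times> B)"
  have finG: "finite G" using B by (simp add: G_def)
  have dlspan: "dl b y \<in> F.span G" if b: "b \<in> B" and y: "y \<in> span B" for b y
  proof -
    have sub: "subspace {y. dl b y \<in> F.span G}"
    proof (rule subspaceI)
      have "dl b 0 = 0" by (simp add: dl_def fun_eq_iff)
      then show "0 \<in> {y. dl b y \<in> F.span G}" using F.span_zero by simp
    next
      fix y1 y2 assume "y1 \<in> {y. dl b y \<in> F.span G}" "y2 \<in> {y. dl b y \<in> F.span G}"
      moreover have "dl b (y1 + y2) = dl b y1 + dl b y2" by (simp add: dl_def fun_eq_iff)
      ultimately show "y1 + y2 \<in> {y. dl b y \<in> F.span G}" using F.span_add by simp
    next
      fix c y1 assume "y1 \<in> {y. dl b y \<in> F.span G}"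
      moreover have "dl b (smul c y1) = fs c (dl b y1)" by (simp add: dl_def fs_def fun_eq_iff)
      ultimately show "smul c y1 \<in> {y. dl b y \<in> F.span G}" using F.span_scale by simp
    qed
    have "dl b y' \<in> F.span G" if "y' \<in> B" for y'
      using that b by (intro F.span_base) (auto simp: G_def)
    then show ?thesis using span_induct[OF y, of "\<lambda>y. dl b y \<in> F.span G"] sub by simp
  qed
  define Fn where "Fn i = (\<lambda>x. if x \<in> B then X (int i + 1) x else 0)" for i :: nat
  have Fn_eq: "Fn i = (\<Sum>b\<in>B. dl b (X (int i + 1) b))" for i
    by (rule ext) (simp add: Fn_def dl_def sum_fun_apply B)
  have FnG: "Fn i \<in> F.span G" for i
    unfolding Fn_eq by (intro F.span_sum dlspan XB) auto
  obtain a where a: "\<exists>i\<le>card G. a i \<noteq> 0" "(\<Sum>i\<le>card G. fs (a i) (Fn i)) = 0"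
    using F.seq_dependent[OF finG, of "card G" Fn] FnG by blast
  obtain m where m: "a m \<noteq> 0" "(\<Sum>i\<le>m. fs (a i) (Fn i)) = 0"
    using F.top_rel[OF a(2) a(1)] by blast
  have onB: "(\<Sum>i\<le>m. smul (a i) (X (int i + 1) b)) = 0" if "b \<in> B" for b
    using fun_cong[OF m(2), of b] that by (simp add: sum_fun_apply fs_def Fn_def)
  have sub: "subspace {w. (\<Sum>i\<le>m. smul (a i) (X (int i + 1) w)) = 0}"
  proof (rule subspaceI)
    show "0 \<in> {w. (\<Sum>i\<le>m. smul (a i) (X (int i + 1) w)) = 0}" by (simp add: lin_0[OF X])
  next
    fix x y assume "x \<in> {w. (\<Sum>i\<le>m. smul (a i) (X (int i + 1) w)) = 0}"
      "y \<in> {w. (\<Sum>i\<le>m. smul (a i) (X (int i + 1) w)) = 0}"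
    then show "x + y \<in> {w. (\<Sum>i\<le>m. smul (a i) (X (int i + 1) w)) = 0}"
      by (simp add: lin_add[OF X] scale_right_distrib sum.distrib)
  next
    fix c x assume "x \<in> {w. (\<Sum>i\<le>m. smul (a i) (X (int i + 1) w)) = 0}"
    moreover have "(\<Sum>i\<le>m. smul (a i) (X (int i + 1) (smul c x))) = smul c (\<Sum>i\<le>m. smul (a i) (X (int i + 1) x))"
      by (simp add: lin_scale[OF X] scale_sum_right mult.commute)
    ultimately show "smul c x \<in> {w. (\<Sum>i\<le>m. smul (a i) (X (int i + 1) w)) = 0}"
      by simp
  qed
  have "(\<Sum>i\<le>m. smul (a i) (X (int i + 1) w)) = 0" if "w \<in> span B" for w
    using span_induct[OF that, of "\<lambda>w. (\<Sum>i\<le>m. smul (a i) (X (int i + 1) w)) = 0"] onB sub by simp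
  then show ?thesis using m(1) by blast
qed

lemma eig_sub: "subspace S \<Longrightarrow> Vector_Spaces.linear smul smul T \<Longrightarrow> subspace {x\<in>S. T x = smul r x}"
  unfolding subspace_def
  by (auto simp: lin_add lin_scale lin_0 scale_right_distrib scale_left_commute)

lemma eig_stab:
  assumes "Y ` S \<subseteq> S" "Vector_Spaces.linear smul smul Y" "\<And>x. x \<in> S \<Longrightarrow> T (Y x) = Y (T x)"
  shows "Y ` {x\<in>S. T x = smul r x} \<subseteq> {x\<in>S. T x = smul r x}"
  using assms by (auto simp: lin_scale)

lemma kill:
  assumes B: "finite B" and S: "subspace S" "S \<subseteq> span B" and u: "u \<in> S" "u \<noteq> 0"
    and Z: "Vector_Spaces.linear smul smul Z" "Z ` S \<subseteq> S"
    and X: "Vector_Spaces.linear smul smul X" "X ` S \<subseteq> S"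
    and Y: "Vector_Spaces.linear smul smul Y" "Y ` S \<subseteq> S"
    and ZX: "\<And>x. x \<in> S \<Longrightarrow> Z (X x) = X (Z x)"
    and ZY: "\<And>x. x \<in> S \<Longrightarrow> Z (Y x) = Y (Z x)"
    and comm: "\<And>x. x \<in> S \<Longrightarrow> X (Y x) - Y (X x) = smul k (Z x)" and k: "k \<noteq> 0"
  shows "\<exists>w\<in>S. w \<noteq> 0 \<and> Z w = 0"
proof -
  obtain w r where w: "w \<in> S" "w \<noteq> 0" "Z w = smul r w" using eigen[OF B S u Z] by blast
  let ?E = "{x\<in>S. Z x = smul r x}"
  have E: "subspace ?E" by (rule eig_sub[OF S(1) Z(1)])
  have "k * r = 0"
  proof (rule heis[OF B E _ _ _ X(1) _ Y(1)])
    show "?E \<subseteq> span B" using S(2) by auto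
    show "w \<in> ?E" using w by auto
    show "w \<noteq> 0" by fact
    show "X ` ?E \<subseteq> ?E" by (rule eig_stab) (use X ZX in auto)
    show "Y ` ?E \<subseteq> ?E" by (rule eig_stab) (use Y ZY in auto)
    fix x assume "x \<in> ?E"
    then show "X (Y x) - Y (X x) = smul (k * r) x" using comm[of x] by simp
  qed
  then have "r = 0" using k by simp
  then show ?thesis using w by auto
qed

lemma antisym_sum:
  fixes f :: "nat \<Rightarrow> nat \<Rightarrow> complex" and Z :: "nat \<Rightarrow> 'm"
  assumes "\<And>n n'. f n' n = - f n n'"
  shows "(\<Sum>n\<in>A. \<Sum>n'\<in>A. smul (f n n') (Z (n + n'))) = 0"
proof -
  let ?S = "\<Sum>n\<in>A. \<Sum>n'\<in>A. smul (f n n') (Z (n + n'))"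
  have "?S = (\<Sum>n'\<in>A. \<Sum>n\<in>A. smul (f n n') (Z (n + n')))" by (rule sum.swap)
  also have "\<dots> = (\<Sum>n'\<in>A. \<Sum>n\<in>A. - smul (f n' n) (Z (n' + n)))"
    by (intro sum.cong refl) (metis assms add.commute scale_minus_left)
  also have "\<dots> = - ?S" by (simp add: sum_negf)
  finally have "?S + ?S = 0" by (simp add: eq_neg_iff_add_eq_0)
  then have "smul (1 + 1) ?S = 0" by (simp only: scale_left_distrib scale_one)
  then show ?thesis by simp
qed

lemma conv_sum:
  fixes a :: "nat \<Rightarrow> complex" and Z :: "nat \<Rightarrow> 'm" and m :: nat
  defines "e \<equiv> \<lambda>t. (\<Sum>p\<in>{p\<in>{..m}\<times>{..m}. fst p + snd p = t}. a (fst p) * a (snd p))"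
  shows "(\<Sum>n\<le>m. \<Sum>n'\<le>m. smul (a n * a n') (Z (n + n'))) = (\<Sum>t\<le>2*m. smul (e t) (Z t))"
    and "e (2*m) = a m * a m"
proof -
  let ?S = "{..m}\<times>{..m}"
  let ?h = "\<lambda>p::nat\<times>nat. fst p + snd p"
  have img: "?h ` ?S = {..2*m}"
  proof
    show "?h ` ?S \<subseteq> {..2*m}" by auto
    show "{..2*m} \<subseteq> ?h ` ?S"
    proof
      fix t assume "t \<in> {..2*m}"
      then have "(min t m, t - min t m) \<in> ?S" "t = ?h (min t m, t - min t m)" by auto
      then show "t \<in> ?h ` ?S" by blast
    qed
  qed
  have "(\<Sum>n\<le>m. \<Sum>n'\<le>m. smul (a n * a n') (Z (n + n'))) = (\<Sum>p\<in>?S. smul (a (fst p) * a (snd p)) (Z (?h p)))"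
    by (simp add: sum.cartesian_product split_def)
  also have "\<dots> = (\<Sum>t\<in>?h ` ?S. \<Sum>p\<in>{p\<in>?S. ?h p = t}. smul (a (fst p) * a (snd p)) (Z (?h p)))"
    by (rule sum.image_gen) simp
  also have "\<dots> = (\<Sum>t\<le>2*m. smul (e t) (Z t))"
    unfolding img e_def by (intro sum.cong refl) (simp add: scale_sum_left)
  finally show "(\<Sum>n\<le>m. \<Sum>n'\<le>m. smul (a n * a n') (Z (n + n'))) = (\<Sum>t\<le>2*m. smul (e t) (Z t))" .
  have "{p\<in>?S. ?h p = 2*m} = {(m,m)}" by auto
  then show "e (2*m) = a m * a m" by (simp add: e_def)
qed

end

locale dmw = cvs smul for smul :: "complex \<Rightarrow> 'm::ab_group_add \<Rightarrow> 'm" +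
  fixes d h :: "int \<Rightarrow> 'm \<Rightarrow> 'm" and B :: "'m set"
  assumes lind: "\<And>n. Vector_Spaces.linear smul smul (d n)"
    and linh: "\<And>n. Vector_Spaces.linear smul smul (h n)"
    and dd: "\<And>m n v. m + n \<noteq> 0 \<Longrightarrow> d m (d n v) - d n (d m v) = smul (of_int (m - n)) (d (m + n) v)"
    and dh: "\<And>m r v. m + r \<noteq> 0 \<Longrightarrow> d m (h r v) - h r (d m v) = smul (of_int (- r)) (h (m + r) v)"
    and hh: "\<And>r s v. r + s \<noteq> 0 \<Longrightarrow> h r (h s v) = h s (h r v)"
    and finB: "finite B"
    and stabd: "\<And>n w. n \<ge> 1 \<Longrightarrow> w \<in> span B \<Longrightarrow> d n w \<in> span B"
    and stabh: "\<And>n w. n \<ge> 1 \<Longrightarrow> w \<in> span B \<Longrightarrow> h n w \<in> span B"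
begin

lemma dd': "m + n \<noteq> 0 \<Longrightarrow> d m (d n v) = d n (d m v) + smul (of_int (m - n)) (d (m + n) v)"
  using dd[of m n v] by (simp add: algebra_simps)
lemma dh': "m + r \<noteq> 0 \<Longrightarrow> d m (h r v) = h r (d m v) + smul (of_int (- r)) (h (m + r) v)"
  using dh[of m r v] by (simp add: algebra_simps)
lemma hd': "m + r \<noteq> 0 \<Longrightarrow> h r (d m v) = d m (h r v) - smul (of_int (- r)) (h (m + r) v)"
  using dh[of m r v] by (simp add: algebra_simps)

lemma vanishD: "\<exists>N. \<forall>k\<ge>N. \<forall>w\<in>span B. d k w = 0"
proof -
  obtain m a where a: "a m \<noteq> 0" and Q: "\<And>w. w \<in> span B \<Longrightarrow> (\<Sum>i\<le>m. smul (a i) (d (int i + 1) w)) = 0"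
  proof -
    have "\<exists>m a. a m \<noteq> 0 \<and> (\<forall>w\<in>span B. (\<Sum>i\<le>m. smul (a i) (d (int i + 1) w)) = 0)"
      by (rule op_relation[OF finB lind]) (auto intro: stabd span_base)
    then show ?thesis using that by blast
  qed
  define e where "e = (\<lambda>t. (\<Sum>p\<in>{p\<in>{..m}\<times>{..m}. fst p + snd p = t}. a (fst p) * a (snd p)))"
  have rel: "(\<Sum>t\<le>2*m. smul (e t) (d (int t + j) w)) = 0" if j: "j \<ge> 3" and w: "w \<in> span B" for j w
  proof -
    define k where "k = j - 2"
    have k1: "k \<ge> 1" using j by (simp add: k_def)
    define P where "P x = (\<Sum>n\<le>m. smul (a n) (d (int n + 1 + k) x))" for x
    have Pw: "P w \<in> span B" unfolding P_def using k1 w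
      by (intro span_sum span_scale stabd) auto
    have "P (\<Sum>n'\<le>m. smul (a n') (d (int n' + 1) w)) - (\<Sum>n'\<le>m. smul (a n') (d (int n' + 1) (P w))) = 0"
      using Q[OF w] Q[OF Pw] by (simp add: P_def lin_0[OF lind])
    moreover have "P (\<Sum>n'\<le>m. smul (a n') (d (int n' + 1) w))
        = (\<Sum>n\<le>m. \<Sum>n'\<le>m. smul (a n * a n') (d (int n + 1 + k) (d (int n' + 1) w)))"
      by (simp add: P_def lin_sum[OF lind] lin_scale[OF lind] scale_sum_right)
    moreover have "(\<Sum>n'\<le>m. smul (a n') (d (int n' + 1) (P w)))
        = (\<Sum>n\<le>m. \<Sum>n'\<le>m. smul (a n * a n') (d (int n' + 1) (d (int n + 1 + k) w)))"
      by (subst sum.swap) (simp add: P_def lin_sum[OF lind] lin_scale[OF lind] scale_sum_right mult.commute)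
    ultimately have "(\<Sum>n\<le>m. \<Sum>n'\<le>m. smul (a n * a n') (d (int n + 1 + k) (d (int n' + 1) w))
        - smul (a n * a n') (d (int n' + 1) (d (int n + 1 + k) w))) = 0"
      by (simp add: sum_subtractf)
    moreover have "\<And>n n'. smul (a n * a n') (d (int n + 1 + k) (d (int n' + 1) w))
        - smul (a n * a n') (d (int n' + 1) (d (int n + 1 + k) w))
      = smul (a n * a n' * (of_nat n - of_nat n')) (d (int (n + n') + 2 + k) w)
        + smul (of_int k) (smul (a n * a n') (d (int (n + n') + 2 + k) w))"
    proof -
      fix n n'
      let ?Z = "d (int (n + n') + 2 + k) w"
      have idx: "int n + 1 + k + (int n' + 1) = int (n + n') + 2 + k" by simp
      have co: "(of_int (int n + 1 + k - (int n' + 1)) :: complex) = of_nat n - of_nat n' + of_int k" by simp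
      have eq: "d (int n + 1 + k) (d (int n' + 1) w) - d (int n' + 1) (d (int n + 1 + k) w)
          = smul (of_nat n - of_nat n' + of_int k) ?Z"
        using dd[of "int n + 1 + k" "int n' + 1" w] k1 unfolding idx co by simp
      have "smul (a n * a n') (d (int n + 1 + k) (d (int n' + 1) w))
          - smul (a n * a n') (d (int n' + 1) (d (int n + 1 + k) w))
          = smul (a n * a n') (d (int n + 1 + k) (d (int n' + 1) w) - d (int n' + 1) (d (int n + 1 + k) w))"
        by (simp only: scale_right_diff_distrib)
      also have "\<dots> = smul (a n * a n') (smul (of_nat n - of_nat n' + of_int k) ?Z)" by (simp only: eq)
      also have "\<dots> = smul (a n * a n' * (of_nat n - of_nat n') + of_int k * (a n * a n')) ?Z"
        by (simp add: algebra_simps)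
      also have "\<dots> = smul (a n * a n' * (of_nat n - of_nat n')) ?Z + smul (of_int k) (smul (a n * a n') ?Z)"
        by (simp only: scale_left_distrib scale_scale)
      finally show "?thesis n n'" .
    qed
    ultimately have "(\<Sum>n\<le>m. \<Sum>n'\<le>m. smul (a n * a n' * (of_nat n - of_nat n')) (d (int (n + n') + 2 + k) w))
        + smul (of_int k) (\<Sum>n\<le>m. \<Sum>n'\<le>m. smul (a n * a n') (d (int (n + n') + 2 + k) w)) = 0"
      by (simp add: sum.distrib scale_sum_right)
    moreover have "(\<Sum>n\<le>m. \<Sum>n'\<le>m. smul (a n * a n' * (of_nat n - of_nat n')) (d (int (n + n') + 2 + k) w)) = 0"
      by (rule antisym_sum[where Z = "\<lambda>t. d (int t + 2 + k) w"]) (simp add: algebra_simps)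
    ultimately have "(\<Sum>n\<le>m. \<Sum>n'\<le>m. smul (a n * a n') (d (int (n + n') + 2 + k) w)) = 0"
      using k1 by simp
    then have "(\<Sum>t\<le>2*m. smul (e t) (d (int t + 2 + k) w)) = 0"
      using conv_sum(1)[of a "\<lambda>t. d (int t + 2 + k) w" m] by (simp add: e_def)
    then show ?thesis by (simp add: k_def)
  qed
  have e2: "e (2*m) \<noteq> 0" using conv_sum(2)[of a m] a by (simp add: e_def)
  have comm: "d 1 (d k w) - d k (d 1 w) = smul (of_int (1 - k)) (d (k + 1) w)" if "k \<ge> 1" for k w
    using dd[of 1 k w] that by (simp add: add.commute)
  have st1: "d 1 ` span B \<subseteq> span B" using stabd by auto
  show ?thesis
    by (rule width[OF lind[of 1] st1 lind, where g=1 and L="2*m" and c=e and jz=3])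
      (auto intro: rel simp: comm e2)
qed

lemma vanishH: "\<exists>N. \<forall>k\<ge>N. \<forall>w\<in>span B. h k w = 0"
proof -
  obtain m a where a: "a m \<noteq> 0" and Q: "\<And>w. w \<in> span B \<Longrightarrow> (\<Sum>i\<le>m. smul (a i) (h (int i + 1) w)) = 0"
  proof -
    have "\<exists>m a. a m \<noteq> 0 \<and> (\<forall>w\<in>span B. (\<Sum>i\<le>m. smul (a i) (h (int i + 1) w)) = 0)"
      by (rule op_relation[OF finB linh]) (auto intro: stabh span_base)
    then show ?thesis using that by blast
  qed
  define c where "c n = a n * of_int (- (int n + 1))" for n
  have rel: "(\<Sum>n\<le>m. smul (c n) (h (int n + j) w)) = 0" if j: "j \<ge> 2" and w: "w \<in> span B" for j w
  proof -
    define k where "k = j - 1"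
    have k1: "k \<ge> 1" using j by (simp add: k_def)
    have dkw: "d k w \<in> span B" using stabd[OF k1 w] .
    have "d k (\<Sum>n\<le>m. smul (a n) (h (int n + 1) w)) - (\<Sum>n\<le>m. smul (a n) (h (int n + 1) (d k w))) = 0"
      using Q[OF w] Q[OF dkw] by (simp add: lin_0[OF lind])
    moreover have "d k (\<Sum>n\<le>m. smul (a n) (h (int n + 1) w)) - (\<Sum>n\<le>m. smul (a n) (h (int n + 1) (d k w)))
       = (\<Sum>n\<le>m. smul (a n) (d k (h (int n + 1) w) - h (int n + 1) (d k w)))"
      by (simp add: lin_sum[OF lind] lin_scale[OF lind] sum_subtractf scale_right_diff_distrib)
    moreover have "d k (h (int n + 1) w) - h (int n + 1) (d k w) = smul (of_int (- (int n + 1))) (h (int n + j) w)" for n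
      using dh[of k "int n + 1" w] k1 by (simp add: k_def algebra_simps)
    ultimately show ?thesis by (simp add: c_def)
  qed
  have "(of_int (- (int m + 1)) :: complex) \<noteq> 0" by (simp only: of_int_eq_0_iff)
  then have c0: "c m \<noteq> 0" unfolding c_def using a by (metis mult_eq_0_iff)
  have comm: "d 1 (h k w) - h k (d 1 w) = smul (of_int (0 - k)) (h (k + 1) w)" if "k \<ge> 1" for k w
    using dh[of 1 k w] that by (simp add: add.commute)
  have st1: "d 1 ` span B \<subseteq> span B" using stabd by auto
  show ?thesis
    by (rule width[OF lind[of 1] st1 linh, where g=0 and L=m and c=c and jz=2])
      (auto intro: rel simp: comm c0)
qed

definition Sk :: "int \<Rightarrow> 'm set" where
  "Sk k = {u\<in>span B. (\<forall>n\<ge>k. d n u = 0) \<and> (\<forall>n\<ge>k. h n u = 0)}"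

lemma Sk_sub: "subspace (Sk k)"
  unfolding Sk_def subspace_def
  by (auto simp: span_zero span_add span_scale lin_0[OF lind] lin_0[OF linh]
      lin_add[OF lind] lin_add[OF linh] lin_scale[OF lind] lin_scale[OF linh])

lemma Sk_stab:
  assumes k: "k \<ge> 1" and m: "m \<ge> 1" and u: "u \<in> Sk k"
  shows "d m u \<in> Sk k" "h m u \<in> Sk k"
proof -
  have uB: "u \<in> span B" and du: "\<And>n. n \<ge> k \<Longrightarrow> d n u = 0" and hu: "\<And>n. n \<ge> k \<Longrightarrow> h n u = 0"
    using u by (auto simp: Sk_def)
  have "d n (d m u) = 0" if "n \<ge> k" for n
    using dd'[of n m u] that k m du[of n] du[of "n + m"] by (simp add: lin_0[OF lind])
  moreover have "h n (d m u) = 0" if "n \<ge> k" for n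
    using hd'[of m n u] that k m hu[of n] hu[of "m + n"] by (simp add: lin_0[OF lind])
  ultimately show "d m u \<in> Sk k" using stabd[OF m uB] by (simp add: Sk_def)
  have "d n (h m u) = 0" if "n \<ge> k" for n
    using dh'[of n m u] that k m du[of n] hu[of "n + m"] by (simp add: lin_0[OF linh])
  moreover have "h n (h m u) = 0" if "n \<ge> k" for n
    using hh[of n m u] that k m hu[of n] by (simp add: lin_0[OF linh])
  ultimately show "h m u \<in> Sk k" using stabh[OF m uB] by (simp add: Sk_def)
qed

lemma Sk_span: "Sk k \<subseteq> span B" by (auto simp: Sk_def)

lemma ker_sub: "subspace S \<Longrightarrow> Vector_Spaces.linear smul smul T \<Longrightarrow> subspace {x\<in>S. T x = 0}"
  using eig_sub[of S T 0] by simp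

lemma Sk_step:
  assumes k: "k \<ge> 3" and u: "u \<in> Sk (k + 1)" "u \<noteq> 0"
  shows "\<exists>u\<in>Sk k. u \<noteq> 0"
proof -
  let ?S = "Sk (k + 1)"
  have k1: "k + 1 \<ge> 1" using k by simp
  have st: "\<And>m x. m \<ge> 1 \<Longrightarrow> x \<in> ?S \<Longrightarrow> d m x \<in> ?S" "\<And>m x. m \<ge> 1 \<Longrightarrow> x \<in> ?S \<Longrightarrow> h m x \<in> ?S"
    using Sk_stab[OF k1] by auto
  have dz: "\<And>n x. n \<ge> k + 1 \<Longrightarrow> x \<in> ?S \<Longrightarrow> d n x = 0" and hz: "\<And>n x. n \<ge> k + 1 \<Longrightarrow> x \<in> ?S \<Longrightarrow> h n x = 0"
    by (auto simp: Sk_def)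
  obtain u1 where u1: "u1 \<in> ?S" "u1 \<noteq> 0" "h k u1 = 0"
  proof -
    have "\<exists>w\<in>?S. w \<noteq> 0 \<and> h k w = 0"
    proof (rule kill[OF finB Sk_sub Sk_span u linh _ lind _ linh])
      show "h k ` ?S \<subseteq> ?S" "d 1 ` ?S \<subseteq> ?S" "h (k - 1) ` ?S \<subseteq> ?S" using st k by auto
      fix x assume x: "x \<in> ?S"
      show "h k (d 1 x) = d 1 (h k x)" using hd'[of 1 k x] hz[OF _ x, of "1 + k"] k by simp
      show "h k (h (k - 1) x) = h (k - 1) (h k x)" using hh[of k "k - 1" x] k by simp
      show "d 1 (h (k - 1) x) - h (k - 1) (d 1 x) = smul (of_int (- (k - 1))) (h k x)"
        using dh[of 1 "k - 1" x] k by simp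
    next
      show "of_int (- (k - 1)) \<noteq> (0::complex)" using k by simp
    qed
    then show ?thesis using that by blast
  qed
  let ?S' = "{x\<in>?S. h k x = 0}"
  have S': "subspace ?S'" by (rule ker_sub[OF Sk_sub linh])
  have st': "d m x \<in> ?S'" if "m \<ge> 1" "x \<in> ?S'" for m x
    using st(1)[OF that(1)] that hd'[of m k x] hz[of "m + k" x] k by (simp add: lin_0[OF lind])
  have "\<exists>w\<in>?S'. w \<noteq> 0 \<and> d k w = 0"
  proof (rule kill[OF finB S' _ _ _ lind _ lind _ lind])
    show "?S' \<subseteq> span B" using Sk_span by auto
    show "u1 \<in> ?S'" "u1 \<noteq> 0" using u1 by auto
    show "d k ` ?S' \<subseteq> ?S'" "d 1 ` ?S' \<subseteq> ?S'" "d (k - 1) ` ?S' \<subseteq> ?S'" using st' k by auto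
    fix x assume x: "x \<in> ?S'"
    then have xS: "x \<in> ?S" by simp
    show "d k (d 1 x) = d 1 (d k x)" using dd'[of 1 k x] dz[OF _ xS, of "1 + k"] k by (simp add: algebra_simps)
    show "d k (d (k - 1) x) = d (k - 1) (d k x)"
      using dd'[of k "k - 1" x] dz[OF _ xS, of "k + (k - 1)"] k by simp
    show "d 1 (d (k - 1) x) - d (k - 1) (d 1 x) = smul (of_int (2 - k)) (d k x)"
      using dd[of 1 "k - 1" x] k by simp
  next
    show "of_int (2 - k) \<noteq> (0::complex)" using k by simp
  qed
  then obtain w where w: "w \<in> ?S" "w \<noteq> 0" "h k w = 0" "d k w = 0" by auto
  have "w \<in> Sk k"
  proof -
    have "d n w = 0" if "n \<ge> k" for n
      using that w(4) dz[OF _ w(1), of n] by (cases "n = k") auto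
    moreover have "h n w = 0" if "n \<ge> k" for n
      using that w(3) hz[OF _ w(1), of n] by (cases "n = k") auto
    ultimately show ?thesis using w(1) by (auto simp: Sk_def)
  qed
  then show ?thesis using w(2) by blast
qed

lemma main_vec:
  assumes u0: "u0 \<in> span B" "u0 \<noteq> 0"
  shows "\<exists>v. v \<noteq> 0 \<and> (\<exists>a b c. d 1 v = smul a v \<and> d 2 v = smul b v \<and> h 1 v = smul c v)
      \<and> (\<forall>n\<ge>3. d n v = 0) \<and> (\<forall>n\<ge>2. h n v = 0)"
proof -
  obtain N1 where N1: "\<And>k w. k \<ge> N1 \<Longrightarrow> w \<in> span B \<Longrightarrow> d k w = 0" using vanishD by blast
  obtain N2 where N2: "\<And>k w. k \<ge> N2 \<Longrightarrow> w \<in> span B \<Longrightarrow> h k w = 0" using vanishH by blast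
  define N where "N = max (max N1 N2) 3"
  have uN: "u0 \<in> Sk N" using u0 N1 N2 by (auto simp: Sk_def N_def)
  have down: "int j \<le> N - 3 \<Longrightarrow> (\<exists>u\<in>Sk (N - int j). u \<noteq> 0)" for j
  proof (induct j)
    case 0
    then show ?case using uN u0 by auto
  next
    case (Suc j)
    then obtain u where u: "u \<in> Sk (N - int j)" "u \<noteq> 0" by auto
    have e: "N - int j = (N - int (Suc j)) + 1" by simp
    have "N - int (Suc j) \<ge> 3" using Suc.prems by simp
    then show ?case using Sk_step[of "N - int (Suc j)" u] u unfolding e by blast
  qed
  have N3: "N - int (nat (N - 3)) = 3" by (simp add: N_def)
  obtain u3 where u3: "u3 \<in> Sk 3" "u3 \<noteq> 0" using down[of "nat (N - 3)"] unfolding N3 by (auto simp: N_def)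
  have st3: "\<And>m x. m \<ge> 1 \<Longrightarrow> x \<in> Sk 3 \<Longrightarrow> d m x \<in> Sk 3" "\<And>m x. m \<ge> 1 \<Longrightarrow> x \<in> Sk 3 \<Longrightarrow> h m x \<in> Sk 3"
    using Sk_stab[of 3] by auto
  have dz: "\<And>n x. n \<ge> 3 \<Longrightarrow> x \<in> Sk 3 \<Longrightarrow> d n x = 0" and hz: "\<And>n x. n \<ge> 3 \<Longrightarrow> x \<in> Sk 3 \<Longrightarrow> h n x = 0"
    by (auto simp: Sk_def)
  have "\<exists>w\<in>Sk 3. w \<noteq> 0 \<and> h 2 w = 0"
  proof (rule kill[OF finB Sk_sub Sk_span u3 linh _ lind _ linh])
    show "h 2 ` Sk 3 \<subseteq> Sk 3" "d 1 ` Sk 3 \<subseteq> Sk 3" "h 1 ` Sk 3 \<subseteq> Sk 3" using st3 by auto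
    fix x assume x: "x \<in> Sk 3"
    show "h 2 (d 1 x) = d 1 (h 2 x)" using hd'[of 1 2 x] hz[OF _ x, of 3] by simp
    show "h 2 (h 1 x) = h 1 (h 2 x)" using hh[of 2 1 x] by simp
    show "d 1 (h 1 x) - h 1 (d 1 x) = smul (of_int (- 1)) (h 2 x)" using dh[of 1 1 x] by simp
  next
    show "of_int (- 1) \<noteq> (0::complex)" by simp
  qed
  then obtain u4 where u4: "u4 \<in> Sk 3" "u4 \<noteq> 0" "h 2 u4 = 0" by blast
  let ?U = "{x\<in>Sk 3. h 2 x = 0}"
  have U: "subspace ?U" by (rule ker_sub[OF Sk_sub linh])
  have UB: "?U \<subseteq> span B" using Sk_span by auto
  have Ud: "d m x \<in> ?U" if "m \<ge> 1" "x \<in> ?U" for m x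
    using st3(1)[OF that(1)] that hd'[of m 2 x] hz[of "m + 2" x] by (simp add: lin_0[OF lind])
  have Uh: "h m x \<in> ?U" if "m \<ge> 1" "x \<in> ?U" for m x
    using st3(2)[OF that(1)] that hh[of 2 m x] by (simp add: lin_0[OF linh])
  have c12: "d 1 (d 2 x) = d 2 (d 1 x)" if "x \<in> ?U" for x
    using dd'[of 1 2 x] dz[of 3 x] that by simp
  have c1h: "d 1 (h 1 x) = h 1 (d 1 x)" if "x \<in> ?U" for x
    using dh'[of 1 1 x] that by simp
  have c2h: "d 2 (h 1 x) = h 1 (d 2 x)" if "x \<in> ?U" for x
    using dh'[of 2 1 x] hz[of 3 x] that by simp
  obtain w1 a where w1: "w1 \<in> ?U" "w1 \<noteq> 0" "d 1 w1 = smul a w1"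
    using eigen[OF finB U UB _ _ lind, of u4] u4 Ud by blast
  let ?E1 = "{x\<in>?U. d 1 x = smul a x}"
  have E1: "subspace ?E1" by (rule eig_sub[OF U lind])
  have E1d2: "d 2 ` ?E1 \<subseteq> ?E1" by (rule eig_stab) (use Ud c12 lind in auto)
  have E1h1: "h 1 ` ?E1 \<subseteq> ?E1" by (rule eig_stab) (use Uh c1h linh in auto)
  obtain w2 b where w2: "w2 \<in> ?E1" "w2 \<noteq> 0" "d 2 w2 = smul b w2"
    using eigen[OF finB E1 _ _ _ lind E1d2, of w1] UB w1 by blast
  let ?E2 = "{x\<in>?E1. d 2 x = smul b x}"
  have E2: "subspace ?E2" by (rule eig_sub[OF E1 lind])
  have E2h1: "h 1 ` ?E2 \<subseteq> ?E2" by (rule eig_stab) (use E1h1 c2h linh in auto)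
  obtain v c where v: "v \<in> ?E2" "v \<noteq> 0" "h 1 v = smul c v"
    using eigen[OF finB E2 _ _ _ linh E2h1, of w2] UB w2 by blast
  have "\<forall>n\<ge>2. h n v = 0"
  proof (intro allI impI)
    fix n :: int assume "n \<ge> 2"
    then show "h n v = 0" using v(1) hz[of n v] by (cases "n = 2") auto
  qed
  then show ?thesis using v dz[of _ v] by blast
qed

end

theorem theorem5p9:
  fixes smul :: "complex \<Rightarrow> 'm::ab_group_add \<Rightarrow> 'm"
    and d h :: "int \<Rightarrow> 'm \<Rightarrow> 'm"
    and c1 c2 c3 :: "'m \<Rightarrow> 'm"
  assumes "Dbar_module smul d h c1 c2 c3"
    and "Dplus_locally_finite smul d h"
    and "\<exists>v::'m. v \<noteq> 0"
  shows "(\<exists>v. v \<noteq> 0 \<and> (\<forall>n\<ge>1. d n v \<in> module.span smul {v} \<and> h n v \<in> module.span smul {v}))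
    \<and> (Dbar_simple smul d h c1 c2 c3 \<longrightarrow>
         Dbar_Whittaker_module smul d h c1 c2 c3 \<or> Dbar_highest_weight_module smul d h c1 c2 c3)"
proof -
  note M = assms(1)[unfolded Dbar_module_def]
  have vs: "vector_space smul" using M by blast
  have lind: "\<And>n. Vector_Spaces.linear smul smul (d n)" using M by blast
  have linh: "\<And>n. Vector_Spaces.linear smul smul (h n)" using M by blast
  have dd: "\<And>m n v. m + n \<noteq> 0 \<Longrightarrow> d m (d n v) - d n (d m v) = smul (of_int (m - n)) (d (m + n) v)"
    using M by simp
  have dh: "\<And>m r v. m + r \<noteq> 0 \<Longrightarrow> d m (h r v) - h r (d m v) = smul (of_int (- r)) (h (m + r) v)"
    using M by simp
  have hh0: "\<And>r s v. r + s \<noteq> 0 \<Longrightarrow> h r (h s v) - h s (h r v) = 0"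
    using M by simp
  have hh: "\<And>r s v. r + s \<noteq> 0 \<Longrightarrow> h r (h s v) = h s (h r v)"
    using hh0 by (metis eq_iff_diff_eq_0)
  obtain v0 :: 'm where v0: "v0 \<noteq> 0" using assms(3) by blast
  obtain W B where W: "v0 \<in> W" "module.subspace smul W" "finite B" "W = module.span smul B"
    "\<And>n. n \<ge> 1 \<Longrightarrow> d n ` W \<subseteq> W \<and> h n ` W \<subseteq> W"
    using assms(2)[unfolded Dplus_locally_finite_def, rule_format, of v0] by blast
  interpret cvs smul using vs by (simp add: cvs_def)
  have stB: "\<And>n w. n \<ge> 1 \<Longrightarrow> w \<in> span B \<Longrightarrow> d n w \<in> span B \<and> h n w \<in> span B"
    using W(4,5) by blast
  have "dmw smul d h B"
    unfolding dmw_def dmw_axioms_def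
    using vs lind linh dd dh hh W(3) stB by (simp add: cvs_def)
  then interpret dmw smul d h B .
  obtain v a b c where v: "v \<noteq> 0" "d 1 v = smul a v" "d 2 v = smul b v" "h 1 v = smul c v"
    "\<And>n. n \<ge> 3 \<Longrightarrow> d n v = 0" "\<And>n. n \<ge> 2 \<Longrightarrow> h n v = 0"
    using main_vec[of v0] W(1,4) v0 by blast
  define phid where "phid n = (if n = 1 then a else if n = 2 then b else 0)" for n :: int
  define phih where "phih n = (if n = 1 then c else 0)" for n :: int
  have eig: "d n v = smul (phid n) v \<and> h n v = smul (phih n) v" if "n \<ge> 1" for n
  proof -
    have "n = 1 \<or> n = 2 \<or> n \<ge> 3" using that by linarith
    then show ?thesis using v by (auto simp: phid_def phih_def)
  qed
  have part1: "\<exists>v. v \<noteq> 0 \<and> (\<forall>n\<ge>1. d n v \<in> span {v} \<and> h n v \<in> span {v})"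
    using v(1) eig by (intro exI[of _ v]) (auto intro: span_scale span_base)
  have hom: "Dplus_Lie_hom phid phih"
    unfolding Dplus_Lie_hom_def
  proof (intro conjI allI impI)
    fix m n :: int assume "m \<ge> 1" "n \<ge> 1"
    then have "m + n = 2 \<and> m = n \<or> m + n \<ge> 3" by linarith
    then show "of_int (m - n) * phid (m + n) = 0" by (auto simp: phid_def)
  next
    fix m r :: int assume "m \<ge> 1" "r \<ge> 1"
    then show "of_int (- r) * phih (m + r) = 0" by (auto simp: phih_def)
  qed
  have part2: "Dbar_Whittaker_module smul d h c1 c2 c3" if simp: "Dbar_simple smul d h c1 c2 c3"
    unfolding Dbar_Whittaker_module_def
  proof (intro exI conjI)
    show "v \<noteq> 0" by (rule v(1))
    show "Dplus_Lie_hom phid phih" by (rule hom)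
    show "\<forall>n\<ge>1. d n v = smul (phid n) v \<and> h n v = smul (phih n) v" using eig by blast
    show "Dbar_generated_by smul d h c1 c2 c3 v"
      unfolding Dbar_generated_by_def
    proof (intro allI impI)
      fix W' assume "Dbar_submodule smul d h c1 c2 c3 W' \<and> v \<in> W'"
      then show "W' = UNIV" using simp v(1) unfolding Dbar_simple_def by blast
    qed
  qed
  show ?thesis using part1 part2 by blast
qed

end
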